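(* Let $n\ge 6$ be even and consider the $[\![n,n-2,2]\!]$ code. Let $U$ be the product of the gates obtained from every tuple $(a,b,c)\in\{2,n\}\times\{3,n\}\times\{4,n\}$, namely $\mathrm{CCZ}_{a,b,c}$ when $a,b,c$ are distinct, $\mathrm{CZ}$ on the two distinct qubits when exactly two are distinct, and $Z_n$ for $(n,n,n)$; explicitly $U = Z_n\,\mathrm{CZ}_{2,n}\mathrm{CZ}_{3,n}\mathrm{CZ}_{4,n}\,\mathrm{CCZ}_{2,3,4}\mathrm{CCZ}_{2,3,n}\mathrm{CCZ}_{2,n,4}\mathrm{CCZ}_{n,3,4}$. Then $U$ preserves the code space and acts on it as the logical $\mathrm{CCZ}$ gate on encoded qubits $1,2,3$: $|\bar x\rangle\mapsto(-1)^{x_1x_2x_3}|\bar x\rangle$.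
   Context: For even $n$, the $[\![n,n-2,2]\!]$ code is the stabilizer code on $n$ qubits with stabilizer generators $X^{\otimes n}$ and $Z^{\otimes n}$, with logical operators $\bar X_j = X_1X_{j+1}$ and $\bar Z_j = Z_{j+1}Z_n$ for $j=1,\dots,n-2$. $|\bar x\rangle$ is the code state with $\bar Z_j|\bar x\rangle = (-1)^{x_j}|\bar x\rangle$. $\mathrm{CZ}=\mathbb 1-2|11\rangle\langle 11|$, $\mathrm{CCZ} = \mathbb 1 - 2|111\rangle\langle111|$. *)

theory Defs
  imports Complex_Main
begin

text \<open>A computational basis string is a
 function b :: nat => bool; a state is psi :: (nat => bool) => complex that is
 supported on strings vanishing outside {1..n} (so the state space is C^(2^n)).\<close>

type_synonym state = "(nat \<Rightarrow> bool) \<Rightarrow> complex"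

definition valid_state :: "nat \<Rightarrow> state \<Rightarrow> bool" where
  "valid_state n \<psi> \<longleftrightarrow> (\<forall>b. (\<exists>i. b i \<and> (i < 1 \<or> n < i)) \<longrightarrow> \<psi> b = 0)"

definition sgn_bit :: "bool \<Rightarrow> complex" where
  "sgn_bit c = (if c then -1 else 1)"

definition Xop :: "nat \<Rightarrow> state \<Rightarrow> state" where
  "Xop i \<psi> = (\<lambda>b. \<psi> (b(i := \<not> b i)))"

definition Zop :: "nat \<Rightarrow> state \<Rightarrow> state" where
  "Zop i \<psi> = (\<lambda>b. sgn_bit (b i) * \<psi> b)"

definition Xall :: "nat \<Rightarrow> state \<Rightarrow> state" where
  "Xall n \<psi> = (\<lambda>b. \<psi> (\<lambda>i. if 1 \<le> i \<and> i \<le> n then \<not> b i else b i))"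

definition Zall :: "nat \<Rightarrow> state \<Rightarrow> state" where
  "Zall n \<psi> = (\<lambda>b. (-1) ^ card {i \<in> {1..n}. b i} * \<psi> b)"

definition CZop :: "nat \<Rightarrow> nat \<Rightarrow> state \<Rightarrow> state" where
  "CZop i j \<psi> = (\<lambda>b. sgn_bit (b i \<and> b j) * \<psi> b)"

definition CCZop :: "nat \<Rightarrow> nat \<Rightarrow> nat \<Rightarrow> state \<Rightarrow> state" where
  "CCZop i j k \<psi> = (\<lambda>b. sgn_bit (b i \<and> b j \<and> b k) * \<psi> b)"

definition in_code :: "nat \<Rightarrow> state \<Rightarrow> bool" where
  "in_code n \<psi> \<longleftrightarrow> valid_state n \<psi> \<and> Xall n \<psi> = \<psi> \<and> Zall n \<psi> = \<psi>"

definition Xbar :: "nat \<Rightarrow> nat \<Rightarrow> state \<Rightarrow> state" where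
  "Xbar n j = Xop 1 \<circ> Xop (j + 1)"

definition Zbar :: "nat \<Rightarrow> nat \<Rightarrow> state \<Rightarrow> state" where
  "Zbar n j = Zop (j + 1) \<circ> Zop n"

text \<open>psi is (a representative of) the code state |x-bar>: in the code space and
 Z-bar_j psi = (-1)^(x_j) psi for j = 1..n-2.\<close>
definition is_logical_state :: "nat \<Rightarrow> (nat \<Rightarrow> bool) \<Rightarrow> state \<Rightarrow> bool" where
  "is_logical_state n x \<psi> \<longleftrightarrow> in_code n \<psi> \<and>
     (\<forall>j \<in> {1..n-2}. Zbar n j \<psi> = (\<lambda>b. sgn_bit (x j) * \<psi> b))"

definition Ugate :: "nat \<Rightarrow> state \<Rightarrow> state" where
  "Ugate n = Zop n \<circ> CZop 2 n \<circ> CZop 3 n \<circ> CZop 4 n \<circ> CCZop 2 3 4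
             \<circ> CCZop 2 3 n \<circ> CCZop 2 n 4 \<circ> CCZop n 3 4"

end

theory Submission
  imports Defs
begin

lemma U_eq:
  assumes "n \<noteq> 2" "n \<noteq> 3" "n \<noteq> 4"
  shows "Ugate n \<psi> = (\<lambda>b. sgn_bit ((b 2 \<noteq> b n) \<and> (b 3 \<noteq> b n) \<and> (b 4 \<noteq> b n)) * \<psi> b)"
proof
  fix b
  show "Ugate n \<psi> b = sgn_bit ((b 2 \<noteq> b n) \<and> (b 3 \<noteq> b n) \<and> (b 4 \<noteq> b n)) * \<psi> b"
    unfolding Ugate_def Zop_def CZop_def CCZop_def
    by (cases "b 2"; cases "b 3"; cases "b 4"; cases "b n"; simp add: sgn_bit_def)
qed

lemma sgn_bit_mult: "sgn_bit a * sgn_bit c = sgn_bit (a \<noteq> c)"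
  by (simp add: sgn_bit_def)

theorem mainTheorem6:
  fixes n :: nat
  assumes "even n" and "6 \<le> n"
  shows "(\<forall>\<psi>. in_code n \<psi> \<longrightarrow> in_code n (Ugate n \<psi>)) \<and>
         (\<forall>x \<psi>. is_logical_state n x \<psi> \<longrightarrow>
            Ugate n \<psi> = (\<lambda>b. sgn_bit (x 1 \<and> x 2 \<and> x 3) * \<psi> b))"
proof (intro conjI allI impI)
  have n: "n \<noteq> 2" "n \<noteq> 3" "n \<noteq> 4" using assms by auto
  fix \<psi> assume h: "in_code n \<psi>"
  hence v: "valid_state n \<psi>" and X: "Xall n \<psi> = \<psi>" and Z: "Zall n \<psi> = \<psi>"
    by (auto simp: in_code_def)
  have "valid_state n (Ugate n \<psi>)" using v by (auto simp: valid_state_def U_eq[OF n])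
  moreover have "Xall n (Ugate n \<psi>) = Ugate n \<psi>"
  proof
    fix b
    have "\<psi> (\<lambda>i. if 1 \<le> i \<and> i \<le> n then \<not> b i else b i) = \<psi> b"
      using fun_cong[OF X, of b] by (simp add: Xall_def)
    then show "Xall n (Ugate n \<psi>) b = Ugate n \<psi> b"
      using assms
      by (simp add: Xall_def U_eq[OF n]; cases "b 2"; cases "b 3"; cases "b 4"; cases "b n"; simp)
  qed
  moreover have "Zall n (Ugate n \<psi>) = Ugate n \<psi>"
  proof
    fix b
    show "Zall n (Ugate n \<psi>) b = Ugate n \<psi> b"
      using fun_cong[OF Z, of b] by (simp add: Zall_def U_eq[OF n] mult.left_commute)
  qed
  ultimately show "in_code n (Ugate n \<psi>)" by (simp add: in_code_def)
next
  have n: "n \<noteq> 2" "n \<noteq> 3" "n \<noteq> 4" using assms by auto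
  fix x \<psi> assume h: "is_logical_state n x \<psi>"
  have J: "\<And>j b. j \<in> {1..n-2} \<Longrightarrow> \<psi> b \<noteq> 0 \<Longrightarrow> (b (j+1) \<noteq> b n) = x j"
  proof -
    fix j b assume j: "j \<in> {1..n-2}" and nz: "\<psi> b \<noteq> 0"
    have "Zbar n j \<psi> b = sgn_bit (x j) * \<psi> b" using h j by (auto simp: is_logical_state_def)
    hence "sgn_bit (b (j+1) \<noteq> b n) * \<psi> b = sgn_bit (x j) * \<psi> b"
      by (simp add: Zbar_def Zop_def mult.assoc[symmetric] sgn_bit_mult)
    hence "sgn_bit (b (j+1) \<noteq> b n) = sgn_bit (x j)" using nz by simp
    thus "(b (j+1) \<noteq> b n) = x j" by (auto simp: sgn_bit_def split: if_splits)
  qed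
  show "Ugate n \<psi> = (\<lambda>b. sgn_bit (x 1 \<and> x 2 \<and> x 3) * \<psi> b)"
  proof
    fix b
    show "Ugate n \<psi> b = sgn_bit (x 1 \<and> x 2 \<and> x 3) * \<psi> b"
    proof (cases "\<psi> b = 0")
      case True thus ?thesis by (simp add: U_eq[OF n])
    next
      case False
      have "1 \<in> {1..n-2}" "2 \<in> {1..n-2}" "3 \<in> {1..n-2}" using assms by auto
      from J[OF this(1) False] J[OF this(2) False] J[OF this(3) False]
      have "(b 2 \<noteq> b n) = x 1" "(b 3 \<noteq> b n) = x 2" "(b 4 \<noteq> b n) = x 3"
        by (simp_all add: numeral_eq_Suc)
      thus ?thesis by (simp add: U_eq[OF n])
    qed
  qed
qed

end
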